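(* Let $n_1,n_2$ be distinct odd primes with $\gcd(n_1-1,n_2-1)=6$, $n=n_1n_2$, and let $D_0,\dots,D_5$ be the Whiteman generalized cyclotomic classes of order 6 modulo $n$ (see context). Let $q$ be a power of a prime $p$ with $\gcd(q,n)=1$ and let $\beta$ be a primitive $n$-th root of unity in an extension of $\mathrm{GF}(q)$. Let $N_1=\{n_1,2n_1,\dots,(n_2-1)n_1\}$ and $N_2=\{n_2,2n_2,\dots,(n_1-1)n_2\}$. Then for every $0\le j\le 5$, $$\sum_{i\in D_j}\beta^{ai}=\begin{cases}-\frac{n_1-1}{6}\bmod p, & a\in N_1,\\ -\frac{n_2-1}{6}\bmod p, & a\in N_2.\end{cases}$$
   Context: Let $e=(n_1-1)(n_2-1)/6$, $g$ a common primitive root of $n_1$ and $n_2$, $u$ an integer with $u\equiv g\pmod{n_1}$, $u\equiv 1\pmod{n_2}$, and $D_i=\{g^su^i\bmod n: s=0,\dots,e-1\}$ for $i=0,\dots,5$. An integer "mod $p$" denotes its image in the prime field $\mathrm{GF}(p)$. *)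

theory Defs
  imports "HOL-Number_Theory.Number_Theory"
begin

definition whiteman_e :: "nat \<Rightarrow> nat \<Rightarrow> nat" where
  "whiteman_e n1 n2 = (n1 - 1) * (n2 - 1) div 6"

definition whiteman_class :: "nat \<Rightarrow> nat \<Rightarrow> nat \<Rightarrow> int \<Rightarrow> nat \<Rightarrow> nat set" where
  "whiteman_class n1 n2 g u i =
     {nat ((int g ^ s * u ^ i) mod int (n1 * n2)) | s. s < whiteman_e n1 n2}"

end

theory Submission imports Defs begin

lemma geo_sum:
  fixes \<delta> :: "'a::field"
  assumes "\<delta> ^ r = 1" "\<delta> \<noteq> 1" "r \<ge> 1"
  shows "(\<Sum>x\<in>{1..<r}. \<delta> ^ x) = -1"
proof -
  have "(\<Sum>x<r. \<delta> ^ x) = 0" using assms by (simp add: sum_gp_strict)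
  moreover have "{..<r} = insert 0 {1..<r}" using assms by auto
  ultimately show ?thesis by (simp add: eq_neg_iff_add_eq_0 add.commute)
qed

lemma primroot_perm:
  assumes "prime r" "residue_primroot r h"
  shows "inj_on (\<lambda>s. h ^ (s + j0) mod r) {..<r-1}"
        "(\<lambda>s. h ^ (s + j0) mod r) ` {..<r-1} = {1..<r}"
proof -
  have cop: "coprime r h" and ord: "ord r h = r - 1"
    using assms by (auto simp: residue_primroot_def totient_prime)
  show inj: "inj_on (\<lambda>s. h ^ (s + j0) mod r) {..<r-1}"
  proof (rule inj_onI)
    fix x y assume "x \<in> {..<r-1}" "y \<in> {..<r-1}" "h ^ (x + j0) mod r = h ^ (y + j0) mod r"
    then have "[h ^ (x + j0) = h ^ (y + j0)] (mod r)" "x < r - 1" "y < r - 1" by (auto simp: cong_def)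
    then have "[x + j0 = y + j0] (mod r - 1)" "x < r - 1" "y < r - 1"
      using order_divides_expdiff[OF cop] ord by auto
    then have "[x = y] (mod r - 1)" "x < r - 1" "y < r - 1" by (auto simp: cong_add_rcancel_nat)
    then show "x = y" by (auto simp: cong_def)
  qed
  have sub: "(\<lambda>s. h ^ (s + j0) mod r) ` {..<r-1} \<subseteq> {1..<r}"
  proof
    fix z assume "z \<in> (\<lambda>s. h ^ (s + j0) mod r) ` {..<r-1}"
    then obtain s where z: "z = h ^ (s + j0) mod r" by auto
    have "coprime r (h ^ (s + j0))" using cop by simp
    then have "\<not> r dvd h ^ (s + j0)" using assms(1)
      by (metis coprime_absorb_left not_prime_unit)
    then have "z \<noteq> 0" using z by (auto simp: dvd_eq_mod_eq_0)
    moreover have "z < r" using z assms(1) prime_gt_0_nat by auto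
    ultimately show "z \<in> {1..<r}" by auto
  qed
  have "card ((\<lambda>s. h ^ (s + j0) mod r) ` {..<r-1}) = card {1..<r}"
    using card_image[OF inj] by simp
  then show "(\<lambda>s. h ^ (s + j0) mod r) ` {..<r-1} = {1..<r}"
    using sub by (intro card_subset_eq) auto
qed

lemma periodic_sum:
  fixes \<delta> :: "'a::field"
  assumes "prime r" "residue_primroot r h" "\<delta> ^ r = 1" "\<delta> \<noteq> 1"
  shows "(\<Sum>s<c * (r - 1). \<delta> ^ (h ^ (s + j0) mod r)) = - of_nat c"
proof -
  have cop: "coprime r h" and ord: "ord r h = r - 1"
    using assms by (auto simp: residue_primroot_def totient_prime)
  have r1: "r \<ge> 1" using prime_gt_0_nat[OF assms(1)] by simp
  have inner: "(\<Sum>s<r - 1. \<delta> ^ (h ^ (s + j0) mod r)) = -1"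
  proof -
    have "(\<Sum>s<r - 1. \<delta> ^ (h ^ (s + j0) mod r)) = (\<Sum>x\<in>{1..<r}. \<delta> ^ x)"
      using sum.reindex[OF primroot_perm(1)[OF assms(1,2), of j0], of "\<lambda>x. \<delta> ^ x"]
        primroot_perm(2)[OF assms(1,2), of j0] by (simp add: o_def)
    also have "\<dots> = -1" by (rule geo_sum[OF assms(3,4) r1])
    finally show ?thesis .
  qed
  have blk: "(\<Sum>s\<in>{m * (r-1)..<m * (r-1) + (r-1)}. \<delta> ^ (h ^ (s + j0) mod r)) = -1" for m
  proof -
    have "(\<Sum>s\<in>{m * (r-1)..<m * (r-1) + (r-1)}. \<delta> ^ (h ^ (s + j0) mod r))
        = (\<Sum>s<r-1. \<delta> ^ (h ^ (s + m * (r-1) + j0) mod r))"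
    proof -
      have I: "{m * (r-1)..<m * (r-1) + (r-1)} = {0 + m * (r-1)..<(r-1) + m * (r-1)}"
        by (simp only: add_0_left add.commute)
      show ?thesis
        unfolding I sum.shift_bounds_nat_ivl atLeast0LessThan by (rule refl)
    qed
    also have "\<dots> = (\<Sum>s<r-1. \<delta> ^ (h ^ (s + j0) mod r))"
    proof (rule sum.cong[OF refl])
      fix s
      have E: "s + m * (r-1) + j0 = (s + j0) + m * (r-1)" by simp
      have "[s + m * (r-1) + j0 = s + j0] (mod ord r h)"
        unfolding ord E cong_def by (rule mod_mult_self1)
      then have "[h ^ (s + m * (r-1) + j0) = h ^ (s + j0)] (mod r)"
        using order_divides_expdiff[OF cop] by blast
      then show "\<delta> ^ (h ^ (s + m * (r-1) + j0) mod r) = \<delta> ^ (h ^ (s + j0) mod r)"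
        by (simp add: cong_def)
    qed
    finally show ?thesis using inner by simp
  qed
  have "(\<Sum>s<c * (r - 1). \<delta> ^ (h ^ (s + j0) mod r))
      = (\<Sum>m<c. \<Sum>s\<in>{m * (r-1)..<m * (r-1) + (r-1)}. \<delta> ^ (h ^ (s + j0) mod r))"
    by (rule sum.nat_group[symmetric])
  also have "\<dots> = - of_nat c" using blk by simp
  finally show ?thesis .
qed

lemma pow_mod_period:
  fixes \<delta> :: "'a::monoid_mult"
  assumes "\<delta> ^ r = 1"
  shows "\<delta> ^ x = \<delta> ^ (x mod r)"
proof -
  have "\<delta> ^ x = \<delta> ^ (r * (x div r) + x mod r)" by (metis mult_div_mod_eq)
  also have "\<dots> = \<delta> ^ (x mod r)" by (simp only: power_add power_mult assms power_one mult_1)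
  finally show ?thesis .
qed

lemma case_lemma:
  fixes \<delta> :: "'a::field"
  assumes "prime r" "residue_primroot r h" "\<delta> ^ r = 1" "\<delta> \<noteq> 1"
    and "\<And>s. [F s = h ^ (s + j0)] (mod r)" "e = c * (r - 1)"
  shows "(\<Sum>s<e. \<delta> ^ (F s)) = - of_nat c"
proof -
  have "(\<Sum>s<e. \<delta> ^ (F s)) = (\<Sum>s<c * (r - 1). \<delta> ^ (h ^ (s + j0) mod r))"
  proof (unfold assms(6), rule sum.cong[OF refl])
    fix s
    have "\<delta> ^ (F s) = \<delta> ^ (F s mod r)" using pow_mod_period[OF assms(3)] .
    also have "\<dots> = \<delta> ^ (h ^ (s + j0) mod r)" using assms(5)[of s] by (simp add: cong_def)
    finally show "\<delta> ^ (F s) = \<delta> ^ (h ^ (s + j0) mod r)" .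
  qed
  also have "\<dots> = - of_nat c" by (rule periodic_sum[OF assms(1-4)])
  finally show ?thesis .
qed

theorem lemma3:
  fixes n1 n2 g p q k m j a :: nat and u :: int and \<beta> :: "'a :: {field, finite}"
  assumes "prime n1" "prime n2" "odd n1" "odd n2" "n1 \<noteq> n2"
    and "gcd (n1 - 1) (n2 - 1) = 6"
    and "residue_primroot n1 g" "residue_primroot n2 g"
    and "[u = int g] (mod int n1)" "[u = 1] (mod int n2)"
    and "prime p" "k \<ge> 1" "q = p ^ k" "coprime q (n1 * n2)"
    and "m \<ge> 1" "card (UNIV :: 'a set) = q ^ m" "CHAR('a) = p"
    and "\<beta> ^ (n1 * n2) = 1" "\<forall>t. 0 < t \<and> t < n1 * n2 \<longrightarrow> \<beta> ^ t \<noteq> 1"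
    and "j \<le> 5"
  shows "(a \<in> {t * n1 | t. 1 \<le> t \<and> t \<le> n2 - 1} \<longrightarrow>
            (\<Sum>i\<in>whiteman_class n1 n2 g u j. \<beta> ^ (a * i)) = - of_nat ((n1 - 1) div 6))
       \<and> (a \<in> {t * n2 | t. 1 \<le> t \<and> t \<le> n1 - 1} \<longrightarrow>
            (\<Sum>i\<in>whiteman_class n1 n2 g u j. \<beta> ^ (a * i)) = - of_nat ((n2 - 1) div 6))"
proof -
  define n where "n = n1 * n2"
  define e where "e = whiteman_e n1 n2"
  define f where "f s = nat ((int g ^ s * u ^ j) mod int n)" for s
  have n1g: "n1 \<ge> 2" and n2g: "n2 \<ge> 2" using assms(1,2) prime_ge_2_nat by auto
  have npos: "n > 0" using n1g n2g by (simp add: n_def)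
  have d1: "6 dvd n1 - 1" and d2: "6 dvd n2 - 1" using assms(6) by (metis gcd_dvd1 gcd_dvd2)+
  have e1: "e = ((n1 - 1) div 6) * (n2 - 1)" and e2: "e = ((n2 - 1) div 6) * (n1 - 1)"
    using d1 d2 by (auto simp: e_def whiteman_e_def elim!: dvdE)
  have lcm: "lcm (n1 - 1) (n2 - 1) = e"
  proof -
    have "(n1 - 1) * (n2 - 1) = 6 * lcm (n1 - 1) (n2 - 1)"
      by (metis prod_gcd_lcm_nat assms(6))
    then show ?thesis by (simp add: e_def whiteman_e_def)
  qed
  have cls: "whiteman_class n1 n2 g u j = f ` {..<e}"
    by (auto simp: whiteman_class_def f_def e_def n_def)
  have fint: "int (f s) = (int g ^ s * u ^ j) mod int n" for s
    using npos by (simp add: f_def)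
  have c1: "[f s = g ^ (s + j)] (mod n1)" for s
  proof -
    have "[int (f s) = int g ^ s * u ^ j] (mod int n1)"
      unfolding fint cong_def n_def by (simp add: mod_mod_cancel)
    moreover have "[int g ^ s * u ^ j = int g ^ s * int g ^ j] (mod int n1)"
      by (intro cong_mult cong_refl cong_pow assms(9))
    ultimately have "[int (f s) = int (g ^ (s + j))] (mod int n1)"
      by (simp add: power_add cong_trans)
    then show ?thesis by (metis cong_int_iff of_nat_power)
  qed
  have c2: "[f s = g ^ (s + 0)] (mod n2)" for s
  proof -
    have "[int (f s) = int g ^ s * u ^ j] (mod int n2)"
      unfolding fint cong_def n_def by (simp add: mod_mod_cancel)
    moreover have "[int g ^ s * u ^ j = int g ^ s * 1 ^ j] (mod int n2)"
      by (intro cong_mult cong_refl cong_pow assms(10))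
    ultimately have "[int (f s) = int (g ^ s)] (mod int n2)"
      by (simp add: cong_trans)
    then show ?thesis by (metis cong_int_iff of_nat_power add_0_right)
  qed
  have cop1: "coprime n1 g" and ord1: "ord n1 g = n1 - 1"
    using assms(1,7) by (auto simp: residue_primroot_def totient_prime)
  have cop2: "coprime n2 g" and ord2: "ord n2 g = n2 - 1"
    using assms(2,8) by (auto simp: residue_primroot_def totient_prime)
  have inj: "inj_on f {..<e}"
  proof (rule inj_onI)
    fix x y assume x: "x \<in> {..<e}" and y: "y \<in> {..<e}" and fxy: "f x = f y"
    have "[g ^ (x + j) = g ^ (y + j)] (mod n1)"
      using c1[of x] c1[of y] fxy by (metis cong_sym cong_trans)
    then have "[x + j = y + j] (mod n1 - 1)" using order_divides_expdiff[OF cop1] ord1 by simp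
    then have A: "[x = y] (mod n1 - 1)" by (simp add: cong_add_rcancel_nat)
    have "[g ^ (x + 0) = g ^ (y + 0)] (mod n2)"
      using c2[of x] c2[of y] fxy by (metis cong_sym cong_trans)
    then have B: "[x = y] (mod n2 - 1)" using order_divides_expdiff[OF cop2] ord2 by simp
    have "[x = y] (mod e)" using cong_cong_lcm_nat[OF A B] lcm by simp
    then show "x = y" using x y by (simp add: cong_def)
  qed
  have sumeq: "(\<Sum>i\<in>whiteman_class n1 n2 g u j. \<beta> ^ (a * i)) = (\<Sum>s<e. (\<beta> ^ a) ^ (f s))"
    unfolding cls by (simp add: sum.reindex[OF inj] power_mult)
  have prim: "\<beta> ^ x \<noteq> 1" if "0 < x" "x < n" for x using assms(19) that n_def by auto
  show ?thesis
  proof (intro conjI impI)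
    assume "a \<in> {t * n1 | t. 1 \<le> t \<and> t \<le> n2 - 1}"
    then obtain t where t: "a = t * n1" "1 \<le> t" "t \<le> n2 - 1" by auto
    have "(\<beta> ^ a) ^ n2 = (\<beta> ^ (n1 * n2)) ^ t"
      unfolding t(1) power_mult[symmetric] by (simp add: ac_simps)
    then have "(\<beta> ^ a) ^ n2 = 1" using assms(18) by simp
    moreover have "\<beta> ^ a \<noteq> 1"
    proof (rule prim)
      show "0 < a" using t n1g by simp
      have "t * n1 < n2 * n1" using t n1g n2g by (intro mult_strict_right_mono) auto
      then show "a < n" using t by (simp add: n_def mult.commute)
    qed
    ultimately show "(\<Sum>i\<in>whiteman_class n1 n2 g u j. \<beta> ^ (a * i)) = - of_nat ((n1 - 1) div 6)"
      unfolding sumeq by (rule case_lemma[of n2 g "\<beta> ^ a" f 0 e "(n1 - 1) div 6", OF assms(2,8) _ _ c2 e1])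
  next
    assume "a \<in> {t * n2 | t. 1 \<le> t \<and> t \<le> n1 - 1}"
    then obtain t where t: "a = t * n2" "1 \<le> t" "t \<le> n1 - 1" by auto
    have "(\<beta> ^ a) ^ n1 = (\<beta> ^ (n1 * n2)) ^ t"
      unfolding t(1) power_mult[symmetric] by (simp add: ac_simps)
    then have "(\<beta> ^ a) ^ n1 = 1" using assms(18) by simp
    moreover have "\<beta> ^ a \<noteq> 1"
    proof (rule prim)
      show "0 < a" using t n2g by simp
      have "t * n2 < n1 * n2" using t n1g n2g by (intro mult_strict_right_mono) auto
      then show "a < n" using t by (simp add: n_def)
    qed
    ultimately show "(\<Sum>i\<in>whiteman_class n1 n2 g u j. \<beta> ^ (a * i)) = - of_nat ((n2 - 1) div 6)"
      unfolding sumeq by (rule case_lemma[of n1 g "\<beta> ^ a" f j e "(n2 - 1) div 6", OF assms(1,7) _ _ c1 e2])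
  qed
qed

end
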